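(* Let $p$ be a prime, $m\ge1$ with $p>m$, and $1\le k\le m$. Let $E_k(x)=\exp\big(\sum_{i=0}^k\frac{x^{p^i}}{p^i}\big)$, let $\pi_k\in\mathbb{C}_p$ be a root of $\sum_{i=0}^k\frac{x^{p^i}}{p^i}=0$ with $\mathrm{ord}_p\,\pi_k=\frac{1}{p^{k-1}(p-1)}$, $\theta_k(x)=E_k(\pi_kx)$ and $\hat\theta_k(x)=\prod_{j=0}^\infty\theta_k(x^{p^j})$. For $0\le j\le k-1$ let $\gamma_{kj}=\sum_{i=0}^j\frac{\pi_k^{p^i}}{p^i}$. Then $$\hat\theta_k(x)=\exp\Big(\sum_{j=0}^{k-1}\gamma_{kj}x^{p^j}\Big),$$ and $\mathrm{ord}_p\,\gamma_{kj}=\frac{1}{p^{k-1-j}(p-1)}-j$.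
   Context: $\mathrm{ord}_p$ is the $p$-adic valuation on $\mathbb{C}_p$ with $\mathrm{ord}_p(p)=1$. *)

theory Defs
  imports "HOL-Computational_Algebra.Formal_Power_Series" "HOL-Library.Extended_Real"
begin

text \<open>A (rank one, real-valued) non-archimedean valuation on a field, normalised by ord(p) = 1.
  The p-adic valuation on C_p is the intended instance.\<close>
definition padic_ord :: "nat \<Rightarrow> ('a::field_char_0 \<Rightarrow> ereal) \<Rightarrow> bool" where
  "padic_ord p v \<longleftrightarrow>
     (\<forall>x. v x = \<infinity> \<longleftrightarrow> x = 0) \<and>
     (\<forall>x. v x \<noteq> -\<infinity>) \<and>
     (\<forall>x y. v (x * y) = v x + v y) \<and>
     (\<forall>x y. v (x + y) \<ge> min (v x) (v y)) \<and>
     v (of_nat p) = 1"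

text \<open>Exponential of a formal power series with zero constant term.\<close>
definition fps_Exp :: "'a::field_char_0 fps \<Rightarrow> 'a fps" where
  "fps_Exp f = fps_exp 1 oo f"

definition Lk_fps :: "nat \<Rightarrow> nat \<Rightarrow> 'a::field_char_0 fps" where
  "Lk_fps p k = (\<Sum>i\<le>k. fps_const (1 / of_nat (p ^ i)) * fps_X ^ (p ^ i))"

definition Lk_val :: "nat \<Rightarrow> nat \<Rightarrow> 'a::field_char_0 \<Rightarrow> 'a" where
  "Lk_val p k x = (\<Sum>i\<le>k. x ^ (p ^ i) / of_nat (p ^ i))"

definition Ek :: "nat \<Rightarrow> nat \<Rightarrow> 'a::field_char_0 fps" where
  "Ek p k = fps_Exp (Lk_fps p k)"

definition theta :: "nat \<Rightarrow> nat \<Rightarrow> 'a::field_char_0 \<Rightarrow> 'a fps" where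
  "theta p k \<pi> = Ek p k oo (fps_const \<pi> * fps_X)"

text \<open>Partial products prod_{j<n} theta_k(x^(p^j)); hat-theta_k is their limit in the
  (x-adic) topology of formal power series.\<close>
definition theta_hat_partial :: "nat \<Rightarrow> nat \<Rightarrow> 'a::field_char_0 \<Rightarrow> nat \<Rightarrow> 'a fps" where
  "theta_hat_partial p k \<pi> n = (\<Prod>j<n. theta p k \<pi> oo fps_X ^ (p ^ j))"

definition gamma :: "nat \<Rightarrow> 'a::field_char_0 \<Rightarrow> nat \<Rightarrow> 'a" where
  "gamma p \<pi> j = (\<Sum>i\<le>j. \<pi> ^ (p ^ i) / of_nat (p ^ i))"

end

theory Submission
  imports Defs
begin


lemma Exp_0: "fps_nth (fps_Exp f) 0 = 1" by (simp add: fps_Exp_def)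

lemma Exp_deriv: "fps_nth f 0 = 0 \<Longrightarrow> fps_deriv (fps_Exp f) = fps_Exp f * fps_deriv f"
  by (simp add: fps_Exp_def fps_compose_deriv)

lemma Exp_add:
  fixes f g :: "'a::field_char_0 fps"
  assumes f0: "fps_nth f 0 = 0" and g0: "fps_nth g 0 = 0"
  shows "fps_Exp (f + g) = fps_Exp f * fps_Exp g"
proof -
  define y where "y = fps_Exp (f + g)"
  define z where "z = fps_Exp f * fps_Exp g"
  define h where "h = fps_deriv f + fps_deriv g"
  have z0: "fps_nth z 0 = 1" by (simp add: z_def Exp_0)
  have y0: "fps_nth y 0 = 1" by (simp add: y_def Exp_0)
  have dy: "fps_deriv y = y * h" unfolding y_def h_def using f0 g0 by (simp add: Exp_deriv)
  have dz: "fps_deriv z = z * h" unfolding z_def h_def using f0 g0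
    by (simp add: Exp_deriv algebra_simps)
  have zi: "z * inverse z = 1" using z0 by (simp add: inverse_mult_eq_1')
  have "fps_deriv (y * inverse z) = y * h * inverse z - y * (z * h * (inverse z)\<^sup>2)"
    using z0 by (simp add: dy dz fps_inverse_deriv algebra_simps)
  also have "\<dots> = y * h * inverse z - y * h * (z * inverse z) * inverse z"
    by (simp add: power2_eq_square algebra_simps)
  also have "\<dots> = 0" by (simp add: zi)
  finally have "y * inverse z = fps_const (fps_nth (y * inverse z) 0)"
    using fps_deriv_eq_0_iff by blast
  also have "fps_nth (y * inverse z) 0 = 1" using y0 z0 by simp
  finally have yz: "y * inverse z = 1" by simp
  have "y = y * (z * inverse z)" using zi by simp
  also have "\<dots> = (y * inverse z) * z" by (simp add: mult_ac)
  finally have "y = z" using yz by simp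
  then show ?thesis by (simp add: y_def z_def)
qed

lemma Exp_sum:
  fixes f :: "'b \<Rightarrow> 'a::field_char_0 fps"
  assumes "\<And>i. fps_nth (f i) 0 = 0"
  shows "fps_Exp (sum f S) = (\<Prod>i\<in>S. fps_Exp (f i))"
proof (induct S rule: infinite_finite_induct)
  case (infinite A) then show ?case by (simp add: fps_Exp_def)
next
  case empty then show ?case by (simp add: fps_Exp_def)
next
  case (insert x F)
  have "fps_nth (sum f F) 0 = 0" using assms by (simp add: fps_sum_nth)
  then show ?case using insert assms by (simp add: Exp_add)
qed

lemma Exp_compose:
  fixes f g :: "'a::field_char_0 fps"
  assumes "fps_nth f 0 = 0" "fps_nth g 0 = 0"
  shows "fps_Exp f oo g = fps_Exp (f oo g)"
  unfolding fps_Exp_def using assms by (simp add: fps_compose_assoc)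

lemma mon_compose:
  fixes g :: "'a::field_char_0 fps"
  assumes "fps_nth g 0 = 0"
  shows "(fps_const a * fps_X ^ m) oo g = fps_const a * g ^ m"
  using assms by (simp add: fps_const_mult_apply_left[symmetric] fps_X_power_compose)

lemma pow_vanish:
  fixes D :: "'a::field_char_0 fps"
  assumes "\<forall>i<M. fps_nth D i = 0" "t < M"
  shows "fps_nth (D ^ Suc j) t = 0"
  using assms by (simp add: fps_mult_nth)

lemma Exp_small:
  fixes D :: "'a::field_char_0 fps"
  assumes "\<forall>i<M. fps_nth D i = 0" "t < M"
  shows "fps_nth (fps_Exp D) t = (if t = 0 then 1 else 0)"
proof -
  have "fps_nth (fps_Exp D) t = (\<Sum>j=0..t. fps_nth (fps_exp 1) j * fps_nth (D ^ j) t)"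
    by (simp add: fps_Exp_def fps_compose_nth)
  also have "\<dots> = (\<Sum>j=0..t. if j = 0 then fps_nth (D ^ 0) t else 0)"
  proof (rule sum.cong)
    fix j assume "j \<in> {0..t}"
    show "fps_nth (fps_exp 1) j * fps_nth (D ^ j) t = (if j = 0 then fps_nth (D ^ 0) t else 0)"
      using pow_vanish[OF assms, of "j - 1"] by (cases j) auto
  qed simp
  also have "\<dots> = (if t = 0 then 1 else 0)" by simp
  finally show ?thesis .
qed



lemma theta_oo:
  fixes \<pi> :: "'a::field_char_0"
  assumes p1: "p > 0"
  shows "theta p k \<pi> oo fps_X ^ (p ^ j) =
     fps_Exp (\<Sum>i\<le>k. fps_const (\<pi> ^ (p ^ i) / of_nat (p ^ i)) * fps_X ^ (p ^ (i + j)))"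
proof -
  have L0: "fps_nth (Lk_fps p k :: 'a fps) 0 = 0" using p1 by (simp add: Lk_fps_def fps_sum_nth)
  have c0: "fps_nth (fps_const \<pi> * fps_X) 0 = 0" by simp
  have "Lk_fps p k oo (fps_const \<pi> * fps_X) =
      (\<Sum>i\<le>k. fps_const (\<pi> ^ (p ^ i) / of_nat (p ^ i)) * fps_X ^ (p ^ i))"
    unfolding Lk_fps_def fps_compose_sum_distrib
    by (rule sum.cong) (simp_all add: mon_compose power_mult_distrib)
  then have th: "theta p k \<pi> = fps_Exp (\<Sum>i\<le>k. fps_const (\<pi> ^ (p ^ i) / of_nat (p ^ i)) * fps_X ^ (p ^ i))"
    unfolding theta_def Ek_def using Exp_compose[OF L0 c0] by simp
  have x0: "fps_nth (fps_X ^ (p ^ j) :: 'a fps) 0 = 0" using p1 by simp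
  have s0: "fps_nth (\<Sum>i\<le>k. fps_const (\<pi> ^ (p ^ i) / of_nat (p ^ i)) * fps_X ^ (p ^ i)) 0 = 0"
    using p1 by (simp add: fps_sum_nth)
  show ?thesis
    unfolding th Exp_compose[OF s0 x0] fps_compose_sum_distrib
    by (rule arg_cong[where f=fps_Exp], rule sum.cong)
       (simp_all only: mon_compose[OF x0], simp add: power_mult[symmetric] power_add mult.commute)
qed

lemma lt_pow: "(p::nat) > 1 \<Longrightarrow> l < p ^ l"
proof (induct l)
  case (Suc l)
  then have "p ^ Suc l \<ge> 2 * p ^ l" by simp
  moreover have "p ^ l \<ge> 1" using Suc by simp
  ultimately show ?case using Suc by linarith
qed simp

lemma coeff_S:
  fixes \<pi> :: "'a::field_char_0"
  assumes p1: "p > 1" and L: "Lk_val p k \<pi> = 0" and tn: "t < n"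
  shows "fps_nth (\<Sum>j<n. \<Sum>i\<le>k. fps_const (\<pi> ^ (p ^ i) / of_nat (p ^ i)) * fps_X ^ (p ^ (i + j))) t
       = fps_nth (\<Sum>l<k. fps_const (gamma p \<pi> l) * fps_X ^ (p ^ l)) t"
proof -
  define a where "a i = \<pi> ^ (p ^ i) / (of_nat (p ^ i) :: 'a)" for i
  show ?thesis
  proof (cases "\<exists>l. t = p ^ l")
    case False
    then show ?thesis by (auto simp: fps_sum_nth intro!: sum.neutral)
  next
    case True
    then obtain l where tl: "t = p ^ l" by blast
    have inj: "p ^ l = p ^ m \<longleftrightarrow> l = m" for m using p1 by (simp add: power_inject_exp)
    have lt: "l < n" using tn tl p1 using lt_pow[OF p1, of l] by linarith
    have "fps_nth (\<Sum>j<n. \<Sum>i\<le>k. fps_const (a i) * fps_X ^ (p ^ (i + j))) t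
        = (\<Sum>j<n. \<Sum>i\<le>k. if j = l - i \<and> i \<le> l then a i else 0)"
      unfolding tl fps_sum_nth
      by (intro sum.cong refl) (auto simp: inj)
    also have "\<dots> = (\<Sum>i\<le>k. \<Sum>j<n. if j = l - i \<and> i \<le> l then a i else 0)"
      by (rule sum.swap)
    also have "\<dots> = (\<Sum>i\<le>k. if i \<le> l then a i else 0)"
      by (intro sum.cong refl) (use lt in \<open>auto simp: sum.delta\<close>)
    also have "\<dots> = (\<Sum>i\<in>{i\<in>{..k}. i \<le> l}. a i)"
      by (rule sum.inter_filter[symmetric]) simp
    also have "\<dots> = (if l < k then gamma p \<pi> l else 0)"
    proof (cases "l < k")
      case True
      then have "{i\<in>{..k}. i \<le> l} = {..l}" by auto
      then show ?thesis using True by (simp add: gamma_def a_def)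
    next
      case False
      then have "{i\<in>{..k}. i \<le> l} = {..k}" by auto
      then show ?thesis using False L by (simp add: Lk_val_def a_def)
    qed
    also have "\<dots> = fps_nth (\<Sum>l<k. fps_const (gamma p \<pi> l) * fps_X ^ (p ^ l)) t"
      unfolding tl fps_sum_nth by (simp add: inj if_distrib[where f="\<lambda>x. _ * x"] sum.delta cong: if_cong)
    finally show ?thesis by (simp add: a_def)
  qed
qed

lemma conv_part:
  fixes \<pi> :: "'a::field_char_0"
  assumes p1: "p > 1" and L: "Lk_val p k \<pi> = 0"
  shows "theta_hat_partial p k \<pi> \<longlonglongrightarrow>
           fps_Exp (\<Sum>j<k. fps_const (gamma p \<pi> j) * fps_X ^ (p ^ j))"
proof (rule tendsto_fpsI)
  fix N
  define A where "A = (\<Sum>j<k. fps_const (gamma p \<pi> j) * fps_X ^ (p ^ j))"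
  define S where "S n = (\<Sum>j<n. \<Sum>i\<le>k. fps_const (\<pi> ^ (p ^ i) / of_nat (p ^ i)) * fps_X ^ (p ^ (i + j)))" for n
  have A0: "fps_nth A 0 = 0" using p1 by (simp add: A_def fps_sum_nth)
  have S0: "fps_nth (S n) 0 = 0" for n using p1 by (simp add: S_def fps_sum_nth)
  have part: "theta_hat_partial p k \<pi> n = fps_Exp (S n)" for n
  proof -
    have "fps_nth (\<Sum>i\<le>k. fps_const (\<pi> ^ (p ^ i) / of_nat (p ^ i)) * fps_X ^ (p ^ (i + j))) 0 = (0::'a)" for j
      using p1 by (simp add: fps_sum_nth)
    then show ?thesis
      unfolding theta_hat_partial_def S_def using p1 by (simp add: theta_oo Exp_sum)
  qed
  show "\<forall>\<^sub>F n in sequentially. fps_nth (theta_hat_partial p k \<pi> n) N = fps_nth (fps_Exp A) N"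
    unfolding eventually_sequentially
  proof (intro exI allI impI)
    fix n assume nN: "n \<ge> Suc N"
    define D where "D = S n - A"
    have D: "\<forall>i<Suc N. fps_nth D i = 0"
      using coeff_S[OF p1 L] nN by (auto simp: D_def S_def A_def)
    have D0: "fps_nth D 0 = 0" using A0 S0 by (simp add: D_def)
    have "theta_hat_partial p k \<pi> n = fps_Exp A * fps_Exp D"
      unfolding part using Exp_add[OF A0 D0] by (simp add: D_def)
    also have "fps_nth \<dots> N = (\<Sum>i=0..N. fps_nth (fps_Exp A) i * (if N = i then 1 else 0))"
      unfolding fps_mult_nth by (intro sum.cong refl) (use Exp_small[OF D] in auto)
    also have "\<dots> = fps_nth (fps_Exp A) N"
      by (simp add: if_distrib[where f="\<lambda>x. _ * x"] sum.delta cong: if_cong)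
    finally show "fps_nth (theta_hat_partial p k \<pi> n) N = fps_nth (fps_Exp A) N" .
  qed
qed

context
  fixes p :: nat and v :: "'a::field_char_0 \<Rightarrow> ereal"
  assumes V: "padic_ord p v"
begin

lemma v_mult: "v (x * y) = v x + v y" using V by (simp add: padic_ord_def)
lemma v_zero: "v x = \<infinity> \<longleftrightarrow> x = 0" using V by (simp add: padic_ord_def)
lemma v_ninf: "v x \<noteq> -\<infinity>" using V by (simp add: padic_ord_def)
lemma v_add: "v (x + y) \<ge> min (v x) (v y)" using V by (simp add: padic_ord_def)
lemma v_p: "v (of_nat p) = 1" using V by (simp add: padic_ord_def)

lemma v_fin: assumes "x \<noteq> 0" obtains r where "v x = ereal r"
  using v_zero[of x] v_ninf[of x] assms by (cases "v x") auto

lemma v1: "v 1 = 0"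
proof -
  obtain r where r: "v 1 = ereal r" using v_fin[of 1] by auto
  have "v (1 * 1) = v 1 + v 1" by (rule v_mult)
  then show ?thesis using r by simp
qed

lemma v_inv: assumes "x \<noteq> 0" shows "v (inverse x) = - v x"
proof -
  obtain r where r: "v x = ereal r" using v_fin assms by blast
  obtain s where s: "v (inverse x) = ereal s" using v_fin[of "inverse x"] assms by auto
  have "v (x * inverse x) = v x + v (inverse x)" by (rule v_mult)
  then have "r + s = 0" using assms r s v1 by (simp add: zero_ereal_def)
  then show ?thesis using r s by simp
qed

lemma v_pow: assumes "v x = ereal r" shows "v (x ^ n) = ereal (real n * r)"
proof (induct n)
  case 0 then show ?case using v1 by (simp add: zero_ereal_def)
next
  case (Suc n) then show ?case using assms v_mult[of x "x^n"] by (simp add: algebra_simps)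
qed

lemma v_neg: "v (- x) = v x"
proof -
  obtain r where r: "v (-1) = ereal r" using v_fin[of "-1"] by auto
  have "v ((-1) * (-1)) = v (-1) + v (-1)" by (rule v_mult)
  then have "v (-1) = 0" using r v1 by simp
  then show ?thesis using v_mult[of "-1" x] by simp
qed

lemma v_strict: assumes "v y < v x" shows "v (x + y) = v y"
proof -
  have a: "v (x + y) \<ge> min (v x) (v y)" by (rule v_add)
  have "v y = v ((x + y) + (- x))" by simp
  also have "\<dots> \<ge> min (v (x + y)) (v (-x))" by (rule v_add)
  finally have "v y \<ge> min (v (x + y)) (v x)" by (simp add: v_neg)
  then show ?thesis using a assms by (auto simp: min_def split: if_splits)
qed

lemma v_sum_gt: assumes "c < \<infinity>" "\<forall>i<(j::nat). v (f i) > c" shows "v (\<Sum>i<j. f i) > c"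
  using assms(2)
proof (induct j)
  case 0 then show ?case using assms(1) v_zero[of 0] by simp
next
  case (Suc j)
  then have "v (\<Sum>i<j. f i) > c" "v (f j) > c" by auto
  then have "min (v (\<Sum>i<j. f i)) (v (f j)) > c" by simp
  then show ?case using v_add[of "\<Sum>i<j. f i" "f j"] by (simp del: min_less_iff_conj)
qed

end


lemma ineq_aux:
  fixes p k i j :: nat
  assumes p1: "p > 1" and ij: "i < j" and jk: "j < k"
  defines "r0 \<equiv> 1 / (real p ^ (k - 1) * (real p - 1))"
  shows "real p ^ j * r0 - real j < real p ^ i * r0 - real i"
proof -
  have P: "real p \<ge> 2" using p1 by simp
  have r0: "r0 > 0" using P by (simp add: r0_def)
  have "real p ^ j \<le> real p ^ (k - 1)" using P jk by (intro power_increasing) auto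
  then have "real p ^ j * r0 \<le> real p ^ (k - 1) * r0" using r0 by (simp add: mult_right_mono)
  also have "\<dots> = 1 / (real p - 1)" using P by (simp add: r0_def field_simps)
  also have "\<dots> \<le> 1" using P by simp
  finally have a: "real p ^ j * r0 \<le> 1" .
  have b: "real p ^ i * r0 > 0" using r0 P by simp
  have "real j \<ge> real i + 1" using ij by simp
  then show ?thesis using a b by linarith
qed

lemma val_gamma:
  fixes \<pi> :: "'a::field_char_0"
  assumes V: "padic_ord p v" and p1: "p > 1" and jk: "j < k"
    and hv: "v \<pi> = ereal (1 / (real p ^ (k - 1) * (real p - 1)))"
  shows "v (gamma p \<pi> j) = ereal (1 / (real p ^ (k - 1 - j) * (real p - 1)) - real j)"
proof -
  define r0 where "r0 = 1 / (real p ^ (k - 1) * (real p - 1))"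
  define a where "a i = \<pi> ^ (p ^ i) / (of_nat (p ^ i) :: 'a)" for i
  have pi0: "\<pi> \<noteq> 0" using hv v_zero[OF V, of 0] by auto
  have va: "v (a i) = ereal (real p ^ i * r0 - real i)" for i
  proof -
    have n0: "(of_nat (p ^ i) :: 'a) \<noteq> 0" using p1 by simp
    have "v (of_nat (p ^ i) :: 'a) = ereal (real i * 1)"
      using v_pow[OF V, of "of_nat p" 1 i] v_p[OF V] by (simp add: one_ereal_def)
    then have "v (inverse (of_nat (p ^ i) :: 'a)) = ereal (- real i)"
      using v_inv[OF V n0] by simp
    moreover have "v (\<pi> ^ (p ^ i)) = ereal (real (p ^ i) * r0)"
      using v_pow[OF V, of \<pi> r0] hv r0_def by simp
    ultimately show ?thesis unfolding a_def divide_inverse v_mult[OF V] by simp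
  qed
  have g: "gamma p \<pi> j = (\<Sum>i<j. a i) + a j"
    unfolding gamma_def a_def by (simp add: lessThan_Suc_atMost[symmetric])
  have "v (\<Sum>i<j. a i) > v (a j)"
    by (rule v_sum_gt[OF V]) (use va ineq_aux[OF p1 _ jk] r0_def in auto)
  then have "v (gamma p \<pi> j) = v (a j)" unfolding g by (rule v_strict[OF V])
  also have "\<dots> = ereal (1 / (real p ^ (k - 1 - j) * (real p - 1)) - real j)"
  proof -
    have e: "real p ^ (k - 1) = real p ^ (k - 1 - j) * real p ^ j"
      using jk by (simp add: power_add[symmetric])
    have "real p ^ j * r0 = 1 / (real p ^ (k - 1 - j) * (real p - 1))"
      using p1 unfolding r0_def e by (simp add: field_simps)
    then show ?thesis using va by simp
  qed
  finally show ?thesis .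
qed


theorem mainTheorem6:
  fixes p m k :: nat and v :: "'a::field_char_0 \<Rightarrow> ereal" and \<pi> :: 'a
  assumes "prime p" and "m \<ge> 1" and "p > m" and "1 \<le> k" and "k \<le> m"
    and "padic_ord p v"
    and "Lk_val p k \<pi> = 0"
    and "v \<pi> = ereal (1 / (real p ^ (k - 1) * (real p - 1)))"
  shows "theta_hat_partial p k \<pi> \<longlonglongrightarrow>
           fps_Exp (\<Sum>j<k. fps_const (gamma p \<pi> j) * fps_X ^ (p ^ j)) \<and>
         (\<forall>j<k. v (gamma p \<pi> j) = ereal (1 / (real p ^ (k - 1 - j) * (real p - 1)) - real j))"
proof -
  have p1: "p > 1" using assms(1) prime_gt_1_nat by blast
  show ?thesis
    using conv_part[OF p1 assms(7)] val_gamma[OF assms(6) p1 _ assms(8)] by blast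
qed

end
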